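(* There exist an absolute constant $c>0$ and an infinite strictly increasing sequence of integer bases $(b_i)_{i\geq1}$, $b_i\ge 2$, such that $\overleftarrow{K}_{b_i}\geq c\log b_i$ for every $i$. In particular $\overleftarrow{K}_{b_i}\to\infty$ as $i\to\infty$.
   Context: For a base $b\ge2$ and a positive integer $n$ with $L$ digits in base $b$, $n=\sum_{0\leq i<L}\varepsilon_i(n)b^i$ ($\varepsilon_i(n)\in\{0,\dots,b-1\}$, $\varepsilon_{L-1}(n)\neq0$), its digital reverse is $\overleftarrow{n}=\sum_{0\leq i<L}\varepsilon_i(n)b^{L-1-i}$; a base-$b$ reversed prime is a number $\overleftarrow{p}$ with $p$ prime. $\overleftarrow{K}_b$ denotes the smallest integer $K$ such that every sufficiently large integer $N$ can be written as a sum of at most $K$ base-$b$ reversed primes, with $\overleftarrow{K}_b=\infty$ if no such $K$ exists. *)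

theory Defs
  imports "HOL-Computational_Algebra.Primes" "HOL-Library.Extended_Nat" Complex_Main
begin

definition num_digits :: "nat \<Rightarrow> nat \<Rightarrow> nat" where
  "num_digits b n = (LEAST L. n < b ^ L)"

definition digit :: "nat \<Rightarrow> nat \<Rightarrow> nat \<Rightarrow> nat" where
  "digit b n i = (n div b ^ i) mod b"

definition digit_rev :: "nat \<Rightarrow> nat \<Rightarrow> nat" where
  "digit_rev b n = (let L = num_digits b n in
     (\<Sum>i<L. digit b n i * b ^ (L - 1 - i)))"

definition rev_primes :: "nat \<Rightarrow> nat set" where
  "rev_primes b = {digit_rev b p | p. prime p}"

definition sum_at_most_rev_primes :: "nat \<Rightarrow> nat \<Rightarrow> nat \<Rightarrow> bool" where
  "sum_at_most_rev_primes b K N \<longleftrightarrow>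
     (\<exists>xs. length xs \<le> K \<and> set xs \<subseteq> rev_primes b \<and> sum_list xs = N)"

definition Krev :: "nat \<Rightarrow> enat" where
  "Krev b = (if \<exists>K. \<forall>\<^sub>F N in sequentially. sum_at_most_rev_primes b K N
             then enat (LEAST K. \<forall>\<^sub>F N in sequentially. sum_at_most_rev_primes b K N)
             else \<infinity>)"

end

theory Submission
  imports Defs
begin
definition prim :: "nat \<Rightarrow> nat" where "prim n = \<Prod>{p. prime p \<and> p \<le> n}"

lemma binom_odd_le: "((2*m+1) choose m) \<le> 4^m"
proof -
  have s: "((2*m+1) choose m) = ((2*m+1) choose (m+1))"
    by (subst binomial_symmetric) auto
  have "((2*m+1) choose m) + ((2*m+1) choose (m+1)) = (\<Sum>k\<in>{m, m+1}. (2*m+1) choose k)"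
    by simp
  also have "\<dots> \<le> (\<Sum>k\<le>2*m+1. (2*m+1) choose k)"
    by (rule sum_mono2) auto
  also have "\<dots> = 2^(2*m+1)" by (rule choose_row_sum)
  also have "\<dots> = 2 * 4^m" by (simp add: power_mult)
  finally show ?thesis using s by simp
qed

lemma prime_dvd_binom:
  assumes "prime p" "m + 1 < p" "p \<le> 2*m+1"
  shows "p dvd ((2*m+1) choose m)"
proof -
  have "fact m * fact (2*m+1-m) * ((2*m+1) choose m) = (fact (2*m+1) :: nat)"
    by (rule binomial_fact_lemma) simp
  moreover have "p dvd (fact (2*m+1) :: nat)" using assms prime_dvd_fact_iff[of p "2*m+1"] by blast
  ultimately have "p dvd fact m * fact (m+1) * ((2*m+1) choose m)"
    by (metis add_diff_cancel_left' mult_2 add.assoc)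
  moreover have "\<not> p dvd (fact m :: nat)" "\<not> p dvd (fact (m+1) :: nat)"
    using assms prime_dvd_fact_iff[of p m] prime_dvd_fact_iff[of p "m+1"] by auto
  ultimately show ?thesis using assms(1) by (simp add: prime_dvd_mult_iff)
qed

lemma prod_primes_dvd:
  fixes A :: "nat set"
  assumes "finite A" "\<forall>p\<in>A. prime p \<and> p dvd x"
  shows "\<Prod>A dvd x"
  using assms
proof (induction A rule: finite_induct)
  case empty then show ?case by simp
next
  case (insert a A)
  have "coprime a (\<Prod>A)"
  proof (rule prime_imp_coprime)
    show "prime a" using insert by auto
    show "\<not> a dvd \<Prod>A"
    proof
      assume "a dvd \<Prod>A"
      then obtain q where "q \<in> A" "a dvd q" using insert prime_dvd_prod_iff[of A a id] by auto
      then show False using insert primes_dvd_imp_eq by (metis insertCI)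
    qed
  qed
  then show ?case using insert by (simp add: divides_mult)
qed

lemma np: "even (n::nat) \<Longrightarrow> n > 2 \<Longrightarrow> \<not> prime n"
  using prime_odd_nat by blast
lemma prim_even: assumes "even n" "n > 2" "n = Suc k" shows "prim n = prim k"
proof -
  have "{p. prime p \<and> p \<le> n} = {p. prime p \<and> p \<le> k}"
  proof (rule Collect_cong)
    fix x
    show "(prime x \<and> x \<le> n) = (prime x \<and> x \<le> k)"
    proof
      assume h: "prime x \<and> x \<le> n"
      then have "x \<noteq> n" using np assms by blast
      then show "prime x \<and> x \<le> k" using h assms by linarith
    next
      assume "prime x \<and> x \<le> k" then show "prime x \<and> x \<le> n" using assms by linarith
    qed
  qed
  then show ?thesis by (simp add: prim_def)
qed
lemma fin: "finite {p. prime p \<and> P p \<and> p \<le> (k::nat)}" by (rule finite_subset[of _ "{..k}"]) auto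
lemma prim_odd: "prim (2*m+1) = prim (m+1) * \<Prod>{p. prime p \<and> m+1 < p \<and> p \<le> 2*m+1}"
proof -
  have "{p. prime p \<and> p \<le> 2*m+1} = {p. prime p \<and> p \<le> m+1} \<union> {p. prime p \<and> m+1 < p \<and> p \<le> 2*m+1}"
    by auto
  then show ?thesis unfolding prim_def
    by (subst prod.union_disjoint[symmetric]) (use fin[of "\<lambda>_. True", simplified] fin in auto)
qed

lemma s1: "{p::nat. prime p \<and> p \<le> 1} = {}"
  using prime_ge_2_nat by (metis (mono_tags) Collect_empty_eq le_trans numeral_le_one_iff semiring_norm(69))
lemma s2: "{p::nat. prime p \<and> p \<le> 2} = {2}"
proof
  show "{p::nat. prime p \<and> p \<le> 2} \<subseteq> {2}"
  proof
    fix p :: nat assume "p \<in> {p. prime p \<and> p \<le> 2}"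
    then have "prime p" "p \<le> 2" by auto
    moreover have "2 \<le> p" using prime_ge_2_nat[OF \<open>prime p\<close>] .
    ultimately show "p \<in> {2}" by simp
  qed
  show "{2} \<subseteq> {p::nat. prime p \<and> p \<le> 2}" using two_is_prime_nat by blast
qed
lemma prim_small: "n \<le> 2 \<Longrightarrow> prim n \<le> 4^n"
proof -
  assume "n \<le> 2"
  then consider "n = 0" | "n = 1" | "n = 2" by linarith
  then show ?thesis
  proof cases
    case 1 then have "{p. prime p \<and> p \<le> n} = {}" using s1 by auto
    then show ?thesis unfolding prim_def by (simp only: prod.empty) simp
  next
    case 2 show ?thesis unfolding prim_def 2 s1 by simp
  next
    case 3 show ?thesis unfolding prim_def 3 s2 by simp
  qed
qed

lemma prim_le: "prim n \<le> 4^n"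
proof (induction n rule: less_induct)
  case (less n)
  show ?case
  proof (cases "n \<le> 2")
    case True
    then show ?thesis by (rule prim_small)
  next
    case False
    then obtain k where k: "n = Suc k" by (cases n) auto
    show ?thesis
    proof (cases "even n")
      case True
      have "prim n = prim k" using prim_even[OF True _ k] False by simp
      also have "\<dots> \<le> 4^k" using less[of k] k by simp
      also have "\<dots> \<le> 4^n" by (rule power_increasing) (use k in auto)
      finally show ?thesis .
    next
      case odd: False
      obtain m where n: "n = 2*m+1" using odd by (metis oddE)
      have "prim n = prim (m+1) * \<Prod>{p. prime p \<and> m+1 < p \<and> p \<le> 2*m+1}"
        using n prim_odd by simp
      also have "\<dots> \<le> 4^(m+1) * ((2*m+1) choose m)"
      proof (rule mult_le_mono)
        have "m + 1 < n" using n False by simp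
        then show "prim (m+1) \<le> 4^(m+1)" using less by blast
        have "\<Prod>{p. prime p \<and> m+1 < p \<and> p \<le> 2*m+1} dvd ((2*m+1) choose m)"
          by (rule prod_primes_dvd) (use prime_dvd_binom[of _ m] fin in auto)
        then show "\<Prod>{p. prime p \<and> m+1 < p \<and> p \<le> 2*m+1} \<le> ((2*m+1) choose m)"
          by (rule dvd_imp_le) simp
      qed
      also have "\<dots> \<le> 4^(m+1) * 4^m" using binom_odd_le by simp
      also have "\<dots> = 4^n" using n by (simp add: power_add[symmetric])
      finally show ?thesis .
    qed
  qed
qed

lemma nd_props:
  assumes b: "b \<ge> 2" and p: "p \<ge> 1"
  shows "p < b ^ num_digits b p" "num_digits b p \<ge> 1" "b ^ (num_digits b p - 1) \<le> p"
proof -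
  have ex: "\<exists>L. p < b ^ L" using power_gt_expt[of b p] b by auto
  show 1: "p < b ^ num_digits b p" unfolding num_digits_def by (rule LeastI_ex[OF ex])
  show 2: "num_digits b p \<ge> 1"
  proof (rule ccontr)
    assume "\<not> num_digits b p \<ge> 1"
    then have "num_digits b p = 0" by simp
    then show False using 1 p by simp
  qed
  have "\<not> p < b ^ (num_digits b p - 1)"
  proof
    assume "p < b ^ (num_digits b p - 1)"
    then have "num_digits b p \<le> num_digits b p - 1" unfolding num_digits_def by (rule Least_le)
    then show False using 2 by simp
  qed
  then show "b ^ (num_digits b p - 1) \<le> p" by simp
qed

lemma tail_bound:
  fixes b :: nat
  assumes "\<forall>j. d j < b"
  shows "(\<Sum>j<m. d j * b ^ (m - 1 - j)) < b ^ m"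
  using assms
proof (induction m arbitrary: d)
  case 0 then show ?case by simp
next
  case (Suc m)
  have IH: "(\<Sum>j<m. d (Suc j) * b ^ (m - 1 - j)) < b ^ m" using Suc.IH[of "\<lambda>j. d (Suc j)"] Suc.prems by simp
  have eq: "(\<Sum>j<Suc m. d j * b ^ (Suc m - 1 - j)) = d 0 * b ^ m + (\<Sum>j<m. d (Suc j) * b ^ (m - 1 - j))"
    by (subst sum.lessThan_Suc_shift) simp
  have "d 0 * b ^ m \<le> (b - 1) * b ^ m" proof (rule mult_right_mono)
    show "d 0 \<le> b - 1" using Suc.prems[rule_format, of 0] by linarith
  qed simp
  then have "d 0 * b ^ m + (\<Sum>j<m. d (Suc j) * b ^ (m - 1 - j)) < (b - 1) * b ^ m + b ^ m" using IH by linarith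
  also have "\<dots> = b * b ^ m" using Suc.prems by (cases b) auto
  finally show ?case using eq by simp
qed

lemma rev_bounds:
  assumes b: "b \<ge> 2" and p: "p \<ge> 1"
  defines "E \<equiv> num_digits b p - 1"
  shows "(p mod b) * b ^ E \<le> digit_rev b p" "digit_rev b p < (p mod b + 1) * b ^ E"
proof -
  have L: "num_digits b p = Suc E" using nd_props(2)[OF b p] unfolding E_def by simp
  have "digit_rev b p = (\<Sum>i<Suc E. digit b p i * b ^ (Suc E - 1 - i))"
    unfolding digit_rev_def Let_def L ..
  also have "\<dots> = digit b p 0 * b ^ E + (\<Sum>j<E. digit b p (Suc j) * b ^ (E - 1 - j))"
    by (subst sum.lessThan_Suc_shift) simp
  also have "digit b p 0 = p mod b" unfolding digit_def by simp
  finally have eq: "digit_rev b p = p mod b * b ^ E + (\<Sum>j<E. digit b p (Suc j) * b ^ (E - 1 - j))" .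
  have "(\<Sum>j<E. digit b p (Suc j) * b ^ (E - 1 - j)) < b ^ E"
    by (rule tail_bound) (use b in \<open>auto simp: digit_def\<close>)
  then show "(p mod b) * b ^ E \<le> digit_rev b p" "digit_rev b p < (p mod b + 1) * b ^ E"
    using eq by simp_all
qed

lemma sum_list_less:
  fixes xs :: "nat list"
  assumes "\<forall>x\<in>set xs. x < c" "xs \<noteq> []"
  shows "sum_list xs < length xs * c"
  using assms
proof (induction xs)
  case Nil then show ?case by simp
next
  case (Cons a xs)
  show ?case
  proof (cases "xs = []")
    case True then show ?thesis using Cons by simp
  next
    case False then show ?thesis using Cons by simp
  qed
qed

lemma prim_pos: "prim n > 0"
  unfolding prim_def by (rule prod_pos) (use prime_gt_0_nat in auto)

lemma prime_dvd_prim: "prime q \<Longrightarrow> q \<le> n \<Longrightarrow> q dvd prim n"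
  unfolding prim_def by (rule dvd_prodI) (use fin[of "\<lambda>_. True"] in auto)

lemma key:
  fixes n L p :: nat
  defines "b \<equiv> 2^n * prim n"
  assumes n: "n \<ge> 2" and L: "L \<ge> 1" and p: "prime p"
    and r: "digit_rev b p \<le> n * b ^ L"
  shows "digit_rev b p < 2 * b ^ L"
proof -
  define x where "x = p mod b"
  define E where "E = num_digits b p - 1"
  have "(2::nat)^2 \<le> 2^n" by (rule power_increasing) (use n in auto)
  then have four: "4 \<le> (2::nat)^n" by simp
  have "2^n * 1 \<le> 2^n * prim n" using prim_pos[of n] by (intro mult_le_mono2) simp
  then have bge: "2^n \<le> b" unfolding b_def by simp
  have b4: "b \<ge> 4" using four bge by linarith
  have b2: "b \<ge> 2" using b4 by simp
  have nb: "n < b" using less_exp[of n] bge by linarith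
  have p1: "p \<ge> 1" using prime_gt_0_nat[OF p] by simp
  note rb = rev_bounds[OF b2 p1, folded E_def x_def]
  note nd = nd_props[OF b2 p1]
  have bE: "b ^ E \<le> p" using nd(3) unfolding E_def .
  have xb: "x < b" unfolding x_def using b2 by simp
  have "b ^ 1 \<le> b ^ L" using L b2 by (intro power_increasing) auto
  then have bL: "b \<le> b ^ L" by simp
  consider "x = 0" | "x = 1" | "2 \<le> x \<and> x \<le> n" | "x \<ge> n + 1" by linarith
  then show ?thesis
  proof cases
    case 1
    then have "b dvd p" unfolding x_def by auto
    moreover have "2 dvd b" unfolding b_def using n by simp
    ultimately have "2 dvd p" by (rule dvd_trans[rotated])
    then have "2 = p" using primes_dvd_imp_eq[OF two_is_prime_nat p] by blast
    then have "b dvd 2" using \<open>b dvd p\<close> by simp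
    then have "b \<le> 2" by (rule dvd_imp_le) simp
    then show ?thesis using b4 by simp
  next
    case 2
    have "b ^ E \<le> digit_rev b p" using rb(1) 2 by simp
    also have "\<dots> \<le> n * b ^ L" by (rule r)
    also have "\<dots> < b * b ^ L" using nb b2 by simp
    also have "\<dots> = b ^ Suc L" by simp
    finally have "E < Suc L" using b2 by (intro power_less_imp_less_exp) auto
    then have "b ^ E \<le> b ^ L" using b2 by (intro power_increasing) auto
    then show ?thesis using rb(2) 2 by simp
  next
    case 3
    then have "x \<noteq> 1" by simp
    then obtain q where q: "prime q" "q dvd x" using prime_factor_nat by blast
    have "x > 0" using 3 by simp
    then have "q \<le> x" using q(2) by (rule dvd_imp_le[rotated])
    then have "q \<le> n" using 3 by simp
    then have "q dvd prim n" using prime_dvd_prim[OF q(1)] by simp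
    then have "q dvd b" unfolding b_def by simp
    then have "q dvd p" using q(2) dvd_mod_iff[of q b p] unfolding x_def by simp
    then have "q = p" using primes_dvd_imp_eq[OF q(1) p] by blast
    then have "p < b" using \<open>q \<le> n\<close> nb by simp
    have "E = 0"
    proof (rule ccontr)
      assume "E \<noteq> 0"
      then have "b ^ 1 \<le> b ^ E" using b2 by (intro power_increasing) auto
      then show False using bE \<open>p < b\<close> by simp
    qed
    then have "digit_rev b p < x + 1" using rb(2) by simp
    also have "\<dots> \<le> b" using xb by simp
    also have "\<dots> \<le> b ^ L" by (rule bL)
    finally show ?thesis by simp
  next
    case 4
    have "(n + 1) * b ^ E \<le> x * b ^ E" using 4 by (rule mult_right_mono) simp
    also have "\<dots> \<le> n * b ^ L" using rb(1) r by linarith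
    finally have "(n + 1) * b ^ E \<le> n * b ^ L" .
    then have h4: "n * b ^ E + b ^ E \<le> n * b ^ L" by (simp add: algebra_simps)
    have "b ^ E < b ^ L"
    proof (rule ccontr)
      assume "\<not> b ^ E < b ^ L"
      then have "b ^ L \<le> b ^ E" by simp
      then have "n * b ^ L \<le> n * b ^ E" by (rule mult_le_mono2)
      moreover have "b ^ E > 0" using b2 by simp
      ultimately show False using h4 by linarith
    qed
    then have "E < L" using b2 by (intro power_less_imp_less_exp) auto
    then have "b ^ Suc E \<le> b ^ L" using b2 by (intro power_increasing) auto
    moreover have "digit_rev b p < (x + 1) * b ^ E" by (rule rb(2))
    moreover have "(x + 1) * b ^ E \<le> b * b ^ E" using xb by (intro mult_right_mono) auto
    ultimately show ?thesis by simp
  qed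
qed

lemma lb:
  fixes n L K :: nat
  defines "b \<equiv> 2^n * prim n"
  assumes n: "n \<ge> 2" and L: "L \<ge> 1" and s: "sum_at_most_rev_primes b K (n * b ^ L)"
  shows "n < 2 * K"
proof -
  obtain xs where xs: "length xs \<le> K" "set xs \<subseteq> rev_primes b" "sum_list xs = n * b ^ L"
    using s unfolding sum_at_most_rev_primes_def by blast
  have bpos: "b > 0" unfolding b_def using prim_pos[of n] by simp
  have all: "\<forall>x\<in>set xs. x < 2 * b ^ L"
  proof
    fix x assume x: "x \<in> set xs"
    then have "x \<in> rev_primes b" using xs(2) by blast
    then obtain p where p: "prime p" "x = digit_rev b p" unfolding rev_primes_def by blast
    have "x \<le> n * b ^ L" using member_le_sum_list[OF x] xs(3) by simp
    then show "x < 2 * b ^ L" using key[OF n L p(1)] p(2) unfolding b_def by simp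
  qed
  have "n * b ^ L > 0" using n bpos by simp
  then have "xs \<noteq> []" using xs(3) by auto
  then have "n * b ^ L < length xs * (2 * b ^ L)" using sum_list_less[OF all] xs(3) by simp
  also have "\<dots> \<le> K * (2 * b ^ L)" using xs(1) by (rule mult_le_mono1)
  finally have "n * b ^ L < (2 * K) * b ^ L" by (simp add: algebra_simps)
  then show ?thesis by (rule mult_less_cancel2[THEN iffD1, THEN conjunct2])
qed

lemma Krev_lb:
  fixes n K :: nat
  assumes n: "n \<ge> 2" and k: "Krev (2^n * prim n) = enat K"
  shows "n < 2 * K"
proof -
  define b where "b = 2^n * prim n"
  have ex: "\<exists>K. \<forall>\<^sub>F N in sequentially. sum_at_most_rev_primes b K N"
    using k unfolding b_def Krev_def by (metis enat.distinct(2))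
  then have K: "K = (LEAST K. \<forall>\<^sub>F N in sequentially. sum_at_most_rev_primes b K N)"
    using k unfolding b_def Krev_def by simp
  have "\<forall>\<^sub>F N in sequentially. sum_at_most_rev_primes b K N"
    unfolding K by (rule LeastI_ex[OF ex])
  then obtain N0 where N0: "\<And>N. N \<ge> N0 \<Longrightarrow> sum_at_most_rev_primes b K N"
    unfolding eventually_sequentially by blast
  have "2^n * 1 \<le> 2^n * prim n" using prim_pos[of n] by (intro mult_le_mono2) simp
  then have "2^n \<le> b" unfolding b_def by simp
  moreover have "(2::nat) \<le> 2^n" using n by (metis One_nat_def le_trans one_le_numeral power_increasing power_one_right Suc_1 Suc_leD)
  ultimately have b2: "b > Suc 0" by linarith
  define L where "L = Suc N0"
  have "L < b ^ L" by (rule power_gt_expt[OF b2])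
  also have "b ^ L \<le> n * b ^ L" using n by simp
  finally have "N0 \<le> n * b ^ L" unfolding L_def by simp
  then have "sum_at_most_rev_primes b K (n * b ^ L)" by (rule N0)
  then show ?thesis using lb[OF n, of L K] unfolding b_def L_def by simp
qed

lemma ln_b:
  fixes n :: nat
  shows "ln (real (2^n * prim n)) \<le> 3 * real n"
proof -
  have "2^n * prim n \<le> 2^n * 4^n" using prim_le[of n] by (rule mult_le_mono2)
  also have "(2::nat)^n * 4^n = 8^n" by (simp add: power_mult_distrib[symmetric])
  finally have le: "real (2^n * prim n) \<le> 8^n" by (metis of_nat_le_iff of_nat_numeral of_nat_power)
  have pos: "real (2^n * prim n) > 0" using prim_pos[of n] by simp
  have "ln (real (2^n * prim n)) \<le> ln ((8::real)^n)" using le pos by simp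
  also have "\<dots> = real n * ln 8" by (simp add: ln_realpow)
  also have "ln (8::real) = 3 * ln 2"
    using ln_realpow[of 2 3] by simp
  also have "real n * (3 * ln 2) \<le> 3 * real n" using ln_2_less_1 mult_left_mono[of "ln 2" 1 "real n"] by simp
  finally show ?thesis .
qed

lemma prim_mono: "prim n \<le> prim (Suc n)"
proof -
  have "prim n dvd prim (Suc n)" unfolding prim_def
    by (rule prod_dvd_prod_subset) (use fin[of "\<lambda>_. True"] in auto)
  then show ?thesis by (rule dvd_imp_le) (rule prim_pos)
qed

theorem theorem6p5:
  shows "\<exists>c::real. c > 0 \<and> (\<exists>b :: nat \<Rightarrow> nat. strict_mono b \<and> (\<forall>i. b i \<ge> 2) \<and>
           (\<forall>i. Krev (b i) = \<infinity> \<or> c * ln (real (b i)) \<le> real (the_enat (Krev (b i)))) \<and>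
           (\<forall>M::nat. \<forall>\<^sub>F i in sequentially. enat M \<le> Krev (b i)))"
proof (intro exI conjI)
  define b where "b = (\<lambda>i::nat. 2^(i+2) * prim (i+2))"
  show "(1/6::real) > 0" by simp
  show "strict_mono b" unfolding strict_mono_Suc_iff
  proof
    fix i
    have "prim (i+2) \<le> prim (Suc (i+2))" by (rule prim_mono)
    then have "2^(i+2) * prim (i+2) \<le> 2^(i+2) * prim (Suc (i+2))" by (rule mult_le_mono2)
    also have "\<dots> < 2 * 2^(i+2) * prim (Suc (i+2))" using prim_pos[of "Suc (i+2)"] by simp
    finally show "b i < b (Suc i)" unfolding b_def by simp
  qed
  show "\<forall>i. b i \<ge> 2"
  proof
    fix i
    have "2^(i+2) * 1 \<le> 2^(i+2) * prim (i+2)" using prim_pos[of "i+2"] by (intro mult_le_mono2) simp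
    moreover have "(2::nat) \<le> 2^(i+2)" by (rule order.trans[OF _ less_exp[THEN less_imp_le]]) simp
    ultimately show "b i \<ge> 2" unfolding b_def by linarith
  qed
  show "\<forall>i. Krev (b i) = \<infinity> \<or> 1/6 * ln (real (b i)) \<le> real (the_enat (Krev (b i)))"
  proof
    fix i
    show "Krev (b i) = \<infinity> \<or> 1/6 * ln (real (b i)) \<le> real (the_enat (Krev (b i)))"
    proof (cases "Krev (b i)")
      case (enat K)
      have "i + 2 < 2 * K" using Krev_lb[of "i+2" K] enat unfolding b_def by simp
      then have "real (i+2) < real (2 * K)" by (simp only: of_nat_less_iff)
      then have h1: "3 * real (i+2) \<le> 6 * real K" by simp
      have h2: "ln (real (b i)) \<le> 3 * real (i+2)" unfolding b_def by (rule ln_b)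
      have "ln (real (b i)) \<le> 6 * real K" using order.trans[OF h2 h1] .
      then have "1/6 * ln (real (b i)) \<le> real K" by simp
      then show ?thesis using enat by simp
    qed simp
  qed
  show "\<forall>M::nat. \<forall>\<^sub>F i in sequentially. enat M \<le> Krev (b i)"
  proof
    fix M :: nat
    show "\<forall>\<^sub>F i in sequentially. enat M \<le> Krev (b i)"
      unfolding eventually_sequentially
    proof (intro exI allI impI)
      fix i assume i: "2 * M \<le> i"
      show "enat M \<le> Krev (b i)"
      proof (cases "Krev (b i)")
        case (enat K)
        have "i + 2 < 2 * K" using Krev_lb[of "i+2" K] enat unfolding b_def by simp
        then have "M \<le> K" using i by linarith
        then show ?thesis using enat by simp
      qed simp
    qed
  qed
qed

end
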